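(* Let $(X,\tau)$ be an extended locally convex space and let $Y$ be a linear subspace of $X$. Then for every linear functional $f$ on $Y$ continuous with respect to $\tau|_Y$, there exists a $\tau$-continuous linear functional $\hat f$ on $X$ with $\hat f|_Y=f$.
   Context: An extended seminorm on a vector space $X$ over $\mathbb{R}$ or $\mathbb{C}$ is a map $\rho:X\to[0,\infty]$ with $\rho(\alpha x)=|\alpha|\rho(x)$ and $\rho(x+y)\le\rho(x)+\rho(y)$. An extended locally convex space $(X,\tau)$ is a vector space with the topology induced by a family $\{\rho_i\}$ of extended seminorms (neighborhood base at $x_0$: $\{x:\max_{i\in J}\rho_i(x-x_0)<\varepsilon\}$, $J$ finite, $\varepsilon>0$). *)

theory Defs
  imports "HOL-Analysis.Analysis"
begin

definition ext_seminorm :: "('k::real_normed_field \<Rightarrow> 'v::ab_group_add \<Rightarrow> 'v) \<Rightarrow> ('v \<Rightarrow> ennreal) \<Rightarrow> bool" where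
  "ext_seminorm smul \<rho> \<longleftrightarrow>
     (\<forall>\<alpha> x. \<rho> (smul \<alpha> x) = ennreal (norm \<alpha>) * \<rho> x) \<and>
     (\<forall>x y. \<rho> (x + y) \<le> \<rho> x + \<rho> y)"

definition elc_topology :: "('v::ab_group_add \<Rightarrow> ennreal) set \<Rightarrow> 'v topology" where
  "elc_topology P = topology (\<lambda>U. \<forall>x0\<in>U. \<exists>J (\<epsilon>::real). finite J \<and> J \<subseteq> P \<and> \<epsilon> > 0 \<and>
       {x. \<forall>\<rho>\<in>J. \<rho> (x - x0) < ennreal \<epsilon>} \<subseteq> U)"

definition linear_functional_on :: "('k::field \<Rightarrow> 'v::ab_group_add \<Rightarrow> 'v) \<Rightarrow> 'v set \<Rightarrow> ('v \<Rightarrow> 'k) \<Rightarrow> bool" where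
  "linear_functional_on smul Y f \<longleftrightarrow>
     (\<forall>x\<in>Y. \<forall>y\<in>Y. f (x + y) = f x + f y) \<and> (\<forall>a. \<forall>x\<in>Y. f (smul a x) = a * f x)"

end

theory Submission
  imports Defs
begin


lemma elc_istop: "istopology (\<lambda>U. \<forall>x0\<in>U. \<exists>J (\<epsilon>::real). finite J \<and> J \<subseteq> P \<and> \<epsilon> > 0 \<and>
       {x. \<forall>\<rho>\<in>J. \<rho> (x - x0) < ennreal \<epsilon>} \<subseteq> U)"
  unfolding istopology_def
proof (intro conjI allI impI ballI)
  fix S T x0 assume S: "\<forall>x0\<in>S. \<exists>J (\<epsilon>::real). finite J \<and> J \<subseteq> P \<and> \<epsilon> > 0 \<and>
       {x. \<forall>\<rho>\<in>J. \<rho> (x - x0) < ennreal \<epsilon>} \<subseteq> S"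
    and T: "\<forall>x0\<in>T. \<exists>J (\<epsilon>::real). finite J \<and> J \<subseteq> P \<and> \<epsilon> > 0 \<and>
       {x. \<forall>\<rho>\<in>J. \<rho> (x - x0) < ennreal \<epsilon>} \<subseteq> T" and x0: "x0 \<in> S \<inter> T"
  obtain J1 e1 where 1: "finite J1" "J1 \<subseteq> P" "e1 > 0" "{x. \<forall>\<rho>\<in>J1. \<rho> (x - x0) < ennreal e1} \<subseteq> S"
    using bspec[OF S IntD1[OF x0]] by (elim exE conjE) blast
  obtain J2 e2 where 2: "finite J2" "J2 \<subseteq> P" "e2 > 0" "{x. \<forall>\<rho>\<in>J2. \<rho> (x - x0) < ennreal e2} \<subseteq> T"
    using bspec[OF T IntD2[OF x0]] by (elim exE conjE) blast
  have sub: "{x. \<forall>\<rho>\<in>J1 \<union> J2. \<rho> (x - x0) < ennreal (min e1 e2)} \<subseteq> S \<inter> T"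
  proof
    fix x assume "x \<in> {x. \<forall>\<rho>\<in>J1 \<union> J2. \<rho> (x - x0) < ennreal (min e1 e2)}"
    then have a: "\<forall>\<rho>\<in>J1 \<union> J2. \<rho> (x - x0) < ennreal (min e1 e2)" by simp
    have m1: "ennreal (min e1 e2) \<le> ennreal e1" by (intro ennreal_leI) simp
    have m2: "ennreal (min e1 e2) \<le> ennreal e2" by (intro ennreal_leI) simp
    have "\<forall>\<rho>\<in>J1. \<rho> (x - x0) < ennreal e1"
      using a m1 by (auto intro: order_less_le_trans)
    moreover have "\<forall>\<rho>\<in>J2. \<rho> (x - x0) < ennreal e2"
      using a m2 by (auto intro: order_less_le_trans)
    ultimately show "x \<in> S \<inter> T" using 1 2 by blast
  qed
  then show "\<exists>J (\<epsilon>::real). finite J \<and> J \<subseteq> P \<and> \<epsilon> > 0 \<and>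
       {x. \<forall>\<rho>\<in>J. \<rho> (x - x0) < ennreal \<epsilon>} \<subseteq> S \<inter> T"
  proof (intro exI conjI)
    show "finite (J1 \<union> J2)" using 1 2 by simp
    show "J1 \<union> J2 \<subseteq> P" using 1 2 by simp
    show "min e1 e2 > 0" using 1 2 by simp
  qed (rule sub)
next
  fix K x0 assume K: "\<forall>S\<in>K. \<forall>x0\<in>S. \<exists>J (\<epsilon>::real). finite J \<and> J \<subseteq> P \<and> \<epsilon> > 0 \<and>
       {x. \<forall>\<rho>\<in>J. \<rho> (x - x0) < ennreal \<epsilon>} \<subseteq> S" and x0K: "x0 \<in> \<Union>K"
  from x0K obtain S where "S \<in> K" "x0 \<in> S" by (rule UnionE)
  then obtain J e where "finite J" "J \<subseteq> P" "e > (0::real)" "{x. \<forall>\<rho>\<in>J. \<rho> (x - x0) < ennreal e} \<subseteq> S"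
    using bspec[OF bspec[OF K \<open>S \<in> K\<close>] \<open>x0 \<in> S\<close>] by (elim exE conjE) blast
  moreover have "S \<subseteq> \<Union>K" using \<open>S \<in> K\<close> by (rule Union_upper)
  ultimately show "\<exists>J (\<epsilon>::real). finite J \<and> J \<subseteq> P \<and> \<epsilon> > 0 \<and>
       {x. \<forall>\<rho>\<in>J. \<rho> (x - x0) < ennreal \<epsilon>} \<subseteq> \<Union>K" by (meson order_trans)
qed

lemma openin_elc: "openin (elc_topology P) U \<longleftrightarrow> (\<forall>x0\<in>U. \<exists>J (\<epsilon>::real). finite J \<and> J \<subseteq> P \<and> \<epsilon> > 0 \<and>
       {x. \<forall>\<rho>\<in>J. \<rho> (x - x0) < ennreal \<epsilon>} \<subseteq> U)"
  unfolding elc_topology_def using elc_istop[of P] by simp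

lemma topspace_elc[simp]: "topspace (elc_topology P) = UNIV"
proof -
  have "openin (elc_topology P) UNIV" unfolding openin_elc
    by (intro ballI exI[of _ "{}"] exI[of _ "1::real"]) auto
  then show ?thesis by (metis openin_subset top.extremum_unique)
qed

lemma cont_to_bound:
  fixes f :: "'v::ab_group_add \<Rightarrow> 'k::real_normed_field"
  assumes "0 \<in> Y" "f 0 = 0"
    and "continuous_map (subtopology (elc_topology P) Y) euclidean f"
  shows "\<exists>J (\<epsilon>::real). finite J \<and> J \<subseteq> P \<and> \<epsilon> > 0 \<and>
     (\<forall>y\<in>Y. (\<forall>\<rho>\<in>J. \<rho> y < ennreal \<epsilon>) \<longrightarrow> norm (f y) < 1)"
proof -
  have ob: "openin euclidean (ball (0::'k) 1)" by simp
  have "openin (subtopology (elc_topology P) Y) {x \<in> topspace (subtopology (elc_topology P) Y). f x \<in> ball 0 1}"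
    by (rule openin_continuous_map_preimage[OF assms(3) ob])
  then have "openin (subtopology (elc_topology P) Y) {x \<in> Y. f x \<in> ball 0 1}" by simp
  then obtain U where U: "openin (elc_topology P) U" "{x \<in> Y. f x \<in> ball 0 1} = U \<inter> Y"
    unfolding openin_subtopology by (elim exE conjE)
  have "0 \<in> {x \<in> Y. f x \<in> ball 0 1}" using assms(1,2) by simp
  then have "0 \<in> U" unfolding U(2) by (rule IntD1)
  then have "\<exists>J (\<epsilon>::real). finite J \<and> J \<subseteq> P \<and> \<epsilon> > 0 \<and> {x. \<forall>\<rho>\<in>J. \<rho> (x - 0) < ennreal \<epsilon>} \<subseteq> U"
    using U(1) unfolding openin_elc by (rule bspec[rotated])
  then obtain J \<epsilon> where J: "finite J" "J \<subseteq> P" "\<epsilon> > (0::real)" "{x. \<forall>\<rho>\<in>J. \<rho> (x - 0) < ennreal \<epsilon>} \<subseteq> U"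
    by (elim exE conjE)
  show ?thesis
  proof (intro exI conjI ballI impI)
    fix y assume y: "y \<in> Y" "\<forall>\<rho>\<in>J. \<rho> y < ennreal \<epsilon>"
    then have "y \<in> {x. \<forall>\<rho>\<in>J. \<rho> (x - 0) < ennreal \<epsilon>}" by simp
    then have "y \<in> U" using J(4) by (rule subsetD[rotated])
    then have "y \<in> U \<inter> Y" using y(1) by (rule IntI)
    then have "y \<in> {x \<in> Y. f x \<in> ball 0 1}" unfolding U(2) .
    then show "norm (f y) < 1" by simp
  qed (use J in auto)
qed

lemma ennreal_scale_less:
  assumes "(v::ennreal) < ennreal a" "b > 0"
  shows "ennreal b * v < ennreal (b * a)"
proof -
  obtain s where s: "v = ennreal s" "s \<ge> 0" using assms(1)
    by (cases v rule: ennreal_cases) auto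
  then have "s < a" using assms(1) by (metis ennreal_less_iff order.strict_trans1 not_less ennreal_le_iff)
  then show ?thesis using s assms(2) by (simp add: ennreal_mult[symmetric] ennreal_lessI)
qed

lemma bound_to_cont:
  fixes g :: "'v::ab_group_add \<Rightarrow> 'k::real_normed_field" and smul :: "'k \<Rightarrow> 'v \<Rightarrow> 'v"
  assumes add: "\<And>x y. g (x + y) = g x + g y"
    and sc: "\<And>c x. g (smul c x) = c * g x"
    and semi: "\<forall>\<rho>\<in>P. ext_seminorm smul \<rho>"
    and J: "finite J" "J \<subseteq> P" "\<eta> > 0" "M > 0"
    and bd: "\<And>x. (\<forall>\<rho>\<in>J. \<rho> x < ennreal \<eta>) \<Longrightarrow> norm (g x) < M"
  shows "continuous_map (elc_topology P) euclidean g"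
  unfolding continuous_map
proof (intro conjI allI impI)
  show "g ` topspace (elc_topology P) \<subseteq> topspace euclidean" by simp
  fix V :: "'k set" assume "openin euclidean V"
  then have V: "open V" by simp
  have gdiff: "g (x - y) = g x - g y" for x y
    using add[of "x - y" y] by (simp add: algebra_simps)
  show "openin (elc_topology P) {x \<in> topspace (elc_topology P). g x \<in> V}"
    unfolding openin_elc
  proof (intro ballI)
    fix x0 assume "x0 \<in> {x \<in> topspace (elc_topology P). g x \<in> V}"
    then have "g x0 \<in> V" by simp
    then obtain r where r: "r > 0" "ball (g x0) r \<subseteq> V" using V open_contains_ball by blast
    show "\<exists>J (\<epsilon>::real). finite J \<and> J \<subseteq> P \<and> \<epsilon> > 0 \<and>
       {x. \<forall>\<rho>\<in>J. \<rho> (x - x0) < ennreal \<epsilon>} \<subseteq> {x \<in> topspace (elc_topology P). g x \<in> V}"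
    proof (intro exI conjI)
      show "\<eta> * r / M > 0" using J r by simp
      show "{x. \<forall>\<rho>\<in>J. \<rho> (x - x0) < ennreal (\<eta> * r / M)} \<subseteq> {x \<in> topspace (elc_topology P). g x \<in> V}"
      proof safe
        fix x assume x: "\<forall>\<rho>\<in>J. \<rho> (x - x0) < ennreal (\<eta> * r / M)"
        define z where "z = smul (of_real (M / r)) (x - x0)"
        have "\<forall>\<rho>\<in>J. \<rho> z < ennreal \<eta>"
        proof
          fix \<rho> assume "\<rho> \<in> J"
          then have "ext_seminorm smul \<rho>" using semi J by auto
          then have "\<rho> z = ennreal (M / r) * \<rho> (x - x0)"
            unfolding z_def ext_seminorm_def using r J by (simp add: norm_divide)
          also have "\<dots> < ennreal ((M / r) * (\<eta> * r / M))"
            using x \<open>\<rho> \<in> J\<close> r J by (intro ennreal_scale_less) auto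
          also have "(M / r) * (\<eta> * r / M) = \<eta>" using r J by simp
          finally show "\<rho> z < ennreal \<eta>" .
        qed
        then have "norm (g z) < M" by (rule bd)
        moreover have "g z = of_real (M / r) * (g x - g x0)" unfolding z_def sc gdiff ..
        moreover have "norm (of_real (M / r) * (g x - g x0)) = (M / r) * norm (g x - g x0)"
          using r J by (simp only: norm_mult norm_of_real) simp
        ultimately have "(M / r) * norm (g x - g x0) < M" by simp
        then have "norm (g x - g x0) < r" using r J
          by (simp add: field_simps)
        then have "g x \<in> ball (g x0) r" by (simp add: dist_norm norm_minus_commute)
        then show "g x \<in> V" using r by blast
      qed simp
    qed (use J in auto)
  qed
qed



definition "good_graph smul S p Y f G \<longleftrightarrow>
   (\<forall>x a b. (x,a)\<in>G \<longrightarrow> (x,b)\<in>G \<longrightarrow> a = b) \<and>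
   (\<forall>x a y b. (x,a)\<in>G \<longrightarrow> (y,b)\<in>G \<longrightarrow> (x+y, a+b)\<in>G) \<and>
   (\<forall>c x a. (x,a)\<in>G \<longrightarrow> (smul c x, c*a)\<in>G) \<and>
   (\<forall>y\<in>Y. (y, f y)\<in>G) \<and>
   (\<forall>x a. (x,a)\<in>G \<longrightarrow> x\<in>S \<longrightarrow> a \<le> (p x::real))"

lemma hb_graph:
  fixes smul :: "real \<Rightarrow> 'a::ab_group_add \<Rightarrow> 'a" and p :: "'a \<Rightarrow> real"
  assumes vs: "vector_space smul"
   and S: "module.subspace smul S" and Y: "module.subspace smul Y"
   and pt: "\<forall>x\<in>S. \<forall>y\<in>S. p (x+y) \<le> p x + p y"
   and ph: "\<forall>c. \<forall>x\<in>S. p (smul c x) = \<bar>c\<bar> * p x"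
   and f: "linear_functional_on smul Y f"
   and dom: "\<forall>y\<in>Y\<inter>S. f y \<le> p y"
  shows "\<exists>g. (\<forall>x y. g (x+y) = g x + g y) \<and> (\<forall>c x. g (smul c x) = c * g x) \<and>
             (\<forall>y\<in>Y. g y = f y) \<and> (\<forall>x\<in>S. g x \<le> p x)"
proof -
  interpret V: vector_space smul by fact
  let ?good = "good_graph smul S p Y f"
  define A where "A = {G. ?good G}"
  define G0 where "G0 = {(y, f y) | y. y \<in> Y}"
  have fadd: "\<forall>x\<in>Y. \<forall>y\<in>Y. f (x + y) = f x + f y" and fsc: "\<forall>a. \<forall>x\<in>Y. f (smul a x) = a * f x"
    using f unfolding linear_functional_on_def by auto
  have "G0 \<in> A"
    unfolding A_def G0_def good_graph_def
    using fadd fsc dom V.subspace_add[OF Y] V.subspace_scale[OF Y] by auto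
  have chain_ub: "\<forall>C\<in>chains A. \<exists>U\<in>A. \<forall>X\<in>C. X \<subseteq> U"
  proof
    fix C assume C: "C \<in> chains A"
    show "\<exists>U\<in>A. \<forall>X\<in>C. X \<subseteq> U"
    proof (cases "C = {}")
      case True then show ?thesis using \<open>G0 \<in> A\<close> by auto
    next
      case False
      have CA: "\<And>G. G \<in> C \<Longrightarrow> ?good G" using chainsD2[OF C] unfolding A_def by auto
      have two: "\<exists>G\<in>C. u \<in> G \<and> v \<in> G" if uv: "u \<in> \<Union>C" "v \<in> \<Union>C" for u v
      proof -
        obtain G1 G2 where "G1 \<in> C" "G2 \<in> C" "u \<in> G1" "v \<in> G2" using uv by blast
        then show ?thesis using chainsD[OF C, of G1 G2] by blast
      qed
      obtain G1 where G1: "G1 \<in> C" using False by blast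
      have "?good (\<Union>C)"
        unfolding good_graph_def
      proof (intro conjI allI impI ballI)
        fix x a b assume "(x, a) \<in> \<Union>C" "(x, b) \<in> \<Union>C"
        then obtain G where "G \<in> C" "(x, a) \<in> G" "(x, b) \<in> G" using two by blast
        then show "a = b" using CA unfolding good_graph_def by blast
      next
        fix x a y b assume "(x, a) \<in> \<Union>C" "(y, b) \<in> \<Union>C"
        then obtain G where "G \<in> C" "(x, a) \<in> G" "(y, b) \<in> G" using two by blast
        then show "(x + y, a + b) \<in> \<Union>C" using CA unfolding good_graph_def by blast
      next
        fix c x a assume "(x, a) \<in> \<Union>C"
        then obtain G where "G \<in> C" "(x, a) \<in> G" by blast
        then show "(smul c x, c * a) \<in> \<Union>C" using CA unfolding good_graph_def by blast
      next
        fix y assume "y \<in> Y"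
        then show "(y, f y) \<in> \<Union>C" using CA[OF G1] G1 unfolding good_graph_def by blast
      next
        fix x a assume "(x, a) \<in> \<Union>C" "x \<in> S"
        then obtain G where "G \<in> C" "(x, a) \<in> G" by blast
        then show "a \<le> p x" using CA \<open>x \<in> S\<close> unfolding good_graph_def by blast
      qed
      then show ?thesis unfolding A_def by blast
    qed
  qed
  obtain M where M: "M \<in> A" and Mmax: "\<forall>X\<in>A. M \<subseteq> X \<longrightarrow> X = M"
    using Zorn_Lemma2[OF chain_ub] by blast
  have gM: "?good M" using M unfolding A_def by simp
  have Msv: "\<And>x a b. (x,a)\<in>M \<Longrightarrow> (x,b)\<in>M \<Longrightarrow> a = b"
   and Madd: "\<And>x a y b. (x,a)\<in>M \<Longrightarrow> (y,b)\<in>M \<Longrightarrow> (x+y, a+b)\<in>M"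
   and Msc: "\<And>c x a. (x,a)\<in>M \<Longrightarrow> (smul c x, c*a)\<in>M"
   and MY: "\<And>y. y\<in>Y \<Longrightarrow> (y, f y)\<in>M"
   and Mp: "\<And>x a. (x,a)\<in>M \<Longrightarrow> x\<in>S \<Longrightarrow> a \<le> p x"
    using gM unfolding good_graph_def by blast+
  have "(0, f 0) \<in> M" using MY V.subspace_0[OF Y] by blast
  define D where "D = {d. \<exists>a. (d,a)\<in>M}"
  have D0: "0 \<in> D" using MY V.subspace_0[OF Y] unfolding D_def by blast
  have Dadd: "x \<in> D \<Longrightarrow> y \<in> D \<Longrightarrow> x + y \<in> D" for x y using Madd unfolding D_def by blast
  have Dsc: "x \<in> D \<Longrightarrow> smul c x \<in> D" for x c using Msc unfolding D_def by blast
  have Dneg: "x \<in> D \<Longrightarrow> - x \<in> D" for x using Dsc[of x "-1"] by simp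
  have Ddiff: "x \<in> D \<Longrightarrow> y \<in> D \<Longrightarrow> x - y \<in> D" for x y
    using Dadd Dneg by (metis diff_conv_add_uminus)
  have Sneg: "x \<in> S \<Longrightarrow> - x \<in> S" for x using V.subspace_neg[OF S] .
  have Sadd: "x \<in> S \<Longrightarrow> y \<in> S \<Longrightarrow> x + y \<in> S" for x y using V.subspace_add[OF S] .
  have Ssc: "x \<in> S \<Longrightarrow> smul c x \<in> S" for x c using V.subspace_scale[OF S] .
  have Sdiff: "x \<in> S \<Longrightarrow> y \<in> S \<Longrightarrow> x - y \<in> S" for x y using V.subspace_diff[OF S] .
  have total: "D = UNIV"
  proof (rule ccontr)
    assume "D \<noteq> UNIV"
    then obtain x where x: "x \<notin> D" by blast
    obtain z where z: "z \<notin> D" and zS: "z \<in> S \<or> (\<forall>d\<in>D. \<forall>t. t \<noteq> 0 \<longrightarrow> d + smul t z \<notin> S)"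
    proof (cases "\<exists>d0\<in>D. x + d0 \<in> S")
      case True
      then obtain d0 where "d0 \<in> D" "x + d0 \<in> S" by blast
      moreover have "x + d0 \<notin> D" using x Ddiff[of "x + d0" d0] \<open>d0 \<in> D\<close> by auto
      ultimately show ?thesis using that by blast
    next
      case False
      have "\<forall>d\<in>D. \<forall>t. t \<noteq> 0 \<longrightarrow> d + smul t x \<notin> S"
      proof (intro ballI allI impI notI)
        fix d t assume "d \<in> D" "t \<noteq> (0::real)" "d + smul t x \<in> S"
        then have "smul (1/t) (d + smul t x) \<in> S" using Ssc by blast
        moreover have "smul (1/t) (d + smul t x) = x + smul (1/t) d"
          using \<open>t \<noteq> 0\<close> by (simp add: V.scale_right_distrib add.commute)
        ultimately show False using False Dsc \<open>d \<in> D\<close> by auto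
      qed
      then show ?thesis using that x by blast
    qed
    have key_ex: "\<exists>c. \<forall>d a t. (d,a)\<in>M \<longrightarrow> d + smul t z \<in> S \<longrightarrow> a + t * c \<le> p (d + smul t z)"
    proof (cases "z \<in> S")
      case False
      then have nz: "\<forall>d\<in>D. \<forall>t. t \<noteq> 0 \<longrightarrow> d + smul t z \<notin> S" using zS by blast
      show ?thesis
      proof (intro exI[of _ 0] allI impI)
        fix d a t assume "(d, a) \<in> M" "d + smul t z \<in> S"
        moreover have "d \<in> D" using \<open>(d, a) \<in> M\<close> unfolding D_def by blast
        ultimately have "t = 0" using nz by blast
        then show "a + t * 0 \<le> p (d + smul t z)" using Mp \<open>(d, a) \<in> M\<close> \<open>d + smul t z \<in> S\<close> by simp
      qed
    next
      case True
      define L where "L = {a - p (d - z) | d a. (d,a)\<in>M \<and> d \<in> S}"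
      have ineq: "a1 - p (d1 - z) \<le> p (d2 + z) - a2"
        if "(d1,a1)\<in>M" "d1\<in>S" "(d2,a2)\<in>M" "d2\<in>S" for d1 a1 d2 a2
      proof -
        have "a1 + a2 \<le> p (d1 + d2)" using Madd[OF that(1,3)] Mp Sadd that by blast
        also have "d1 + d2 = (d1 - z) + (d2 + z)" by (simp add: algebra_simps)
        also have "p \<dots> \<le> p (d1 - z) + p (d2 + z)" using pt Sdiff Sadd that True by blast
        finally show ?thesis by simp
      qed
      have S0: "0 \<in> S" using V.subspace_0[OF S] .
      have Lne: "L \<noteq> {}" unfolding L_def using \<open>(0, f 0) \<in> M\<close> S0 by blast
      have Lbd: "bdd_above L" unfolding L_def bdd_above_def
        using ineq[OF _ _ \<open>(0, f 0) \<in> M\<close> S0] by blast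
      define c where "c = Sup L"
      have cge: "a - p (d - z) \<le> c" if "(d,a)\<in>M" "d\<in>S" for d a
        unfolding c_def using Lbd that by (intro cSup_upper) (auto simp: L_def)
      have cle: "c \<le> p (d + z) - a" if "(d,a)\<in>M" "d\<in>S" for d a
        unfolding c_def using Lne that ineq by (intro cSup_least) (auto simp: L_def)
      show ?thesis
      proof (intro exI[of _ c] allI impI)
        fix d a t assume da: "(d, a) \<in> M" "d + smul t z \<in> S"
        have "d = (d + smul t z) - smul t z" by simp
        then have dS: "d \<in> S" using da(2) Ssc[OF True] Sdiff by metis
        consider "t = 0" | "t > 0" | "t < 0" by linarith
        then show "a + t * c \<le> p (d + smul t z)"
        proof cases
          case 1 then show ?thesis using Mp da dS by simp
        next
          case 2
          have m: "(smul (1/t) d, (1/t) * a) \<in> M" using Msc da(1) by blast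
          have "c \<le> p (smul (1/t) d + z) - (1/t) * a" using cle[OF m Ssc[OF dS]] .
          then have "t * c \<le> t * p (smul (1/t) d + z) - a" using 2
            by (simp add: field_simps)
          also have "t * p (smul (1/t) d + z) = p (smul t (smul (1/t) d + z))"
            using ph Sadd[OF Ssc[OF dS] True] 2 by simp
          also have "smul t (smul (1/t) d + z) = d + smul t z"
            using 2 by (simp add: V.scale_right_distrib)
          finally show ?thesis by simp
        next
          case 3
          define s where "s = - t"
          have s: "s > 0" using 3 s_def by simp
          have m: "(smul (1/s) d, (1/s) * a) \<in> M" using Msc da(1) by blast
          have "(1/s) * a - p (smul (1/s) d - z) \<le> c" using cge[OF m Ssc[OF dS]] .
          then have "a - s * p (smul (1/s) d - z) \<le> s * c" using s
            by (simp add: field_simps)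
          also have "s * p (smul (1/s) d - z) = p (smul s (smul (1/s) d - z))"
            using ph Sdiff[OF Ssc[OF dS] True] s by simp
          also have "smul s (smul (1/s) d - z) = d + smul t z"
            using s by (simp add: V.scale_right_diff_distrib s_def)
          finally show ?thesis using s_def by simp
        qed
      qed
    qed
    then obtain c where c: "\<And>d a t. (d,a)\<in>M \<Longrightarrow> d + smul t z \<in> S \<Longrightarrow> a + t * c \<le> p (d + smul t z)"
      by blast
    define M' where "M' = {(d + smul t z, a + t * c) | d a t. (d,a)\<in>M}"
    have uniq: "t = t'" if "d \<in> D" "d' \<in> D" "d + smul t z = d' + smul t' z" for d d' t t'
    proof (rule ccontr)
      assume "t \<noteq> t'"
      have "d - d' = smul (t' - t) z" using that(3)
        by (simp add: V.scale_left_diff_distrib algebra_simps)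
      then have "smul (1/(t' - t)) (d - d') = z" using \<open>t \<noteq> t'\<close> by simp
      then show False using z Dsc Ddiff that by metis
    qed
    have "?good M'"
      unfolding good_graph_def
    proof (intro conjI allI impI ballI)
      fix x a b assume "(x, a) \<in> M'" "(x, b) \<in> M'"
      then obtain d1 a1 t1 d2 a2 t2 where m: "(d1,a1)\<in>M" "(d2,a2)\<in>M" "x = d1 + smul t1 z" "x = d2 + smul t2 z"
        "a = a1 + t1 * c" "b = a2 + t2 * c" unfolding M'_def by blast
      have "t1 = t2" using uniq[of d1 d2 t1 t2] m unfolding D_def by blast
      then have "d1 = d2" using m by simp
      then show "a = b" using m Msv \<open>t1 = t2\<close> by blast
    next
      fix x a y b assume "(x, a) \<in> M'" "(y, b) \<in> M'"
      then obtain d1 a1 t1 d2 a2 t2 where m: "(d1,a1)\<in>M" "(d2,a2)\<in>M" "x = d1 + smul t1 z" "y = d2 + smul t2 z"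
        "a = a1 + t1 * c" "b = a2 + t2 * c" unfolding M'_def by blast
      have "x + y = (d1 + d2) + smul (t1 + t2) z" using m by (simp add: V.scale_left_distrib algebra_simps)
      moreover have "a + b = (a1 + a2) + (t1 + t2) * c" using m by (simp add: algebra_simps)
      ultimately show "(x + y, a + b) \<in> M'" unfolding M'_def using Madd[OF m(1,2)] by blast
    next
      fix k x a assume "(x, a) \<in> M'"
      then obtain d1 a1 t1 where m: "(d1,a1)\<in>M" "x = d1 + smul t1 z" "a = a1 + t1 * c"
        unfolding M'_def by blast
      have "smul k x = smul k d1 + smul (k * t1) z" using m by (simp add: V.scale_right_distrib)
      moreover have "k * a = k * a1 + (k * t1) * c" using m by (simp add: algebra_simps)
      ultimately show "(smul k x, k * a) \<in> M'" unfolding M'_def using Msc[OF m(1)] by blast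
    next
      fix y assume "y \<in> Y"
      then show "(y, f y) \<in> M'" unfolding M'_def using MY[of y] by force
    next
      fix x a assume "(x, a) \<in> M'" "x \<in> S"
      then obtain d1 a1 t1 where m: "(d1,a1)\<in>M" "x = d1 + smul t1 z" "a = a1 + t1 * c"
        unfolding M'_def by blast
      then show "a \<le> p x" using c \<open>x \<in> S\<close> by blast
    qed
    then have "M' \<in> A" unfolding A_def by simp
    moreover have "M \<subseteq> M'"
    proof
      fix u assume "u \<in> M"
      then obtain d a where "u = (d, a)" "(d,a) \<in> M" by (cases u) auto
      then show "u \<in> M'" unfolding M'_def by (intro CollectI exI[of _ d] exI[of _ a] exI[of _ 0]) simp
    qed
    ultimately have "M' = M" using Mmax by blast
    moreover have "(0 + smul 1 z, f 0 + 1 * c) \<in> M'" unfolding M'_def using \<open>(0, f 0) \<in> M\<close>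
      by blast
    then have "(z, f 0 + c) \<in> M'" by simp
    ultimately show False using z unfolding D_def by blast
  qed
  define g where "g x = (THE a. (x,a)\<in>M)" for x
  have gM: "(x, g x) \<in> M" for x
  proof -
    obtain a where a: "(x,a)\<in>M" using total unfolding D_def by blast
    show ?thesis unfolding g_def by (rule theI[of _ a]) (use a Msv in blast)+
  qed
  have gval: "(x,a)\<in>M \<Longrightarrow> g x = a" for x a using gM Msv by blast
  show ?thesis
  proof (intro exI[of _ g] conjI allI ballI)
    fix x y show "g (x + y) = g x + g y" using gval[OF Madd[OF gM gM]] .
  next
    fix c x show "g (smul c x) = c * g x" using gval[OF Msc[OF gM]] .
  next
    fix y assume "y \<in> Y" then show "g y = f y" using gval[OF MY] by blast
  next
    fix x assume "x \<in> S" then show "g x \<le> p x" using Mp[OF gM] by blast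
  qed
qed



lemma real_core:
  fixes smul :: "real \<Rightarrow> 'a::ab_group_add \<Rightarrow> 'a" and f :: "'a \<Rightarrow> real"
  assumes vs: "vector_space smul"
   and semi: "\<forall>\<rho>\<in>P. ext_seminorm smul \<rho>"
   and Y: "module.subspace smul Y"
   and f: "linear_functional_on smul Y f"
   and J: "finite J" "J \<subseteq> P" "\<epsilon> > 0"
   and bd: "\<forall>y\<in>Y. (\<forall>\<rho>\<in>J. \<rho> y < ennreal \<epsilon>) \<longrightarrow> \<bar>f y\<bar> < 1"
  shows "\<exists>g. (\<forall>x y. g (x+y) = g x + g y) \<and> (\<forall>c x. g (smul c x) = c * g x) \<and>
             (\<forall>y\<in>Y. g y = f y) \<and> (\<exists>\<eta>>0. \<forall>x. (\<forall>\<rho>\<in>J. \<rho> x < ennreal \<eta>) \<longrightarrow> \<bar>g x\<bar> < 1)"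
proof -
  interpret V: vector_space smul by fact
  have rsc: "\<rho> (smul c x) = ennreal \<bar>c\<bar> * \<rho> x" if "\<rho> \<in> J" for \<rho> c x
    using semi J that unfolding ext_seminorm_def by auto
  have rtri: "\<rho> (x + y) \<le> \<rho> x + \<rho> y" if "\<rho> \<in> J" for \<rho> x y
    using semi J that unfolding ext_seminorm_def by auto
  have r0: "\<rho> 0 = 0" if "\<rho> \<in> J" for \<rho>
    using rsc[OF that, of 0 0] by simp
  define S where "S = {x. \<forall>\<rho>\<in>J. \<rho> x < top}"
  have S: "V.subspace S"
    unfolding V.subspace_def S_def
  proof (intro conjI ballI allI; clarsimp)
    show "\<rho> \<in> J \<Longrightarrow> \<rho> 0 < top" for \<rho> using r0[of \<rho>] by (simp add: top.not_eq_extremum)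
    show "\<lbrakk>\<forall>\<rho>\<in>J. \<rho> x < top; \<forall>\<rho>\<in>J. \<rho> y < top; \<rho> \<in> J\<rbrakk> \<Longrightarrow> \<rho> (x + y) < top" for x y \<rho>
    proof -
      assume a: "\<forall>\<rho>\<in>J. \<rho> x < top" "\<forall>\<rho>\<in>J. \<rho> y < top" "\<rho> \<in> J"
      then have "\<rho> x + \<rho> y < top" by (simp add: ennreal_add_less_top)
      then show ?thesis using rtri[OF a(3), of x y] by (rule le_less_trans[rotated])
    qed
    show "\<lbrakk>\<forall>\<rho>\<in>J. \<rho> x < top; \<rho> \<in> J\<rbrakk> \<Longrightarrow> \<rho> (smul c x) < top" for x c \<rho>
      using rsc[of \<rho> c x] by (simp add: ennreal_mult_less_top)
  qed
  define q where "q x = (\<Sum>\<rho>\<in>J. enn2real (\<rho> x))" for x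
  define p where "p x = q x / \<epsilon>" for x
  have q0: "q x \<ge> 0" for x unfolding q_def by (simp add: sum_nonneg)
  have pt: "\<forall>x\<in>S. \<forall>y\<in>S. p (x+y) \<le> p x + p y"
  proof (intro ballI)
    fix x y assume "x \<in> S" "y \<in> S"
    have "enn2real (\<rho> (x + y)) \<le> enn2real (\<rho> x) + enn2real (\<rho> y)" if "\<rho> \<in> J" for \<rho>
    proof -
      have "\<rho> x < top" "\<rho> y < top" using \<open>x \<in> S\<close> \<open>y \<in> S\<close> that unfolding S_def by auto
      then have "enn2real (\<rho> (x + y)) \<le> enn2real (\<rho> x + \<rho> y)"
        using rtri[OF that] by (intro enn2real_mono) (auto simp: ennreal_add_less_top)
      also have "\<dots> = enn2real (\<rho> x) + enn2real (\<rho> y)"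
        using \<open>\<rho> x < top\<close> \<open>\<rho> y < top\<close> by (rule enn2real_plus)
      finally show ?thesis .
    qed
    then have "q (x + y) \<le> q x + q y" unfolding q_def sum.distrib[symmetric] by (rule sum_mono)
    then show "p (x+y) \<le> p x + p y" unfolding p_def using J by (metis add_divide_distrib divide_right_mono less_imp_le)
  qed
  have ph: "\<forall>c. \<forall>x\<in>S. p (smul c x) = \<bar>c\<bar> * p x"
  proof (intro allI ballI)
    fix c x
    have "q (smul c x) = \<bar>c\<bar> * q x"
      unfolding q_def sum_distrib_left
      by (intro sum.cong refl) (simp add: rsc enn2real_mult)
    then show "p (smul c x) = \<bar>c\<bar> * p x" unfolding p_def by simp
  qed
  have fadd: "\<forall>x\<in>Y. \<forall>y\<in>Y. f (x + y) = f x + f y" and fsc: "\<forall>a. \<forall>x\<in>Y. f (smul a x) = a * f x"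
    using f unfolding linear_functional_on_def by auto
  have dom: "\<forall>y\<in>Y\<inter>S. f y \<le> p y"
  proof (intro ballI)
    fix y assume yYS: "y \<in> Y \<inter> S"
    show "f y \<le> p y"
    proof (rule ccontr)
      assume "\<not> f y \<le> p y"
      then have m: "p y < \<bar>f y\<bar>" by simp
      have p0: "p y \<ge> 0" unfolding p_def using q0 J by simp
      define m where "m = \<bar>f y\<bar>"
      have mpos: "m > 0" using m p0 unfolding m_def by linarith
      define y' where "y' = smul (1/m) y"
      have "y \<in> Y" using yYS by simp
      then have "y' \<in> Y" unfolding y'_def by (rule V.subspace_scale[OF Y])
      moreover have "\<forall>\<rho>\<in>J. \<rho> y' < ennreal \<epsilon>"
      proof
        fix \<rho> assume r: "\<rho> \<in> J"
        have fin: "\<rho> y < top" using yYS r unfolding S_def by auto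
        have "enn2real (\<rho> y) \<le> q y" unfolding q_def
          by (rule member_le_sum) (use r J in auto)
        also have "q y = \<epsilon> * p y" unfolding p_def using J by (simp add: field_simps)
        also have "\<dots> < \<epsilon> * m" using m J unfolding m_def by (intro mult_strict_left_mono) auto
        finally have "enn2real (\<rho> y) < \<epsilon> * m" .
        then have lt: "(1/m) * enn2real (\<rho> y) < \<epsilon>" using mpos by (simp add: pos_divide_less_eq)
        have "\<rho> y' = ennreal (1/m) * \<rho> y" unfolding y'_def using rsc[OF r] mpos by simp
        also have "\<rho> y = ennreal (enn2real (\<rho> y))" using fin by (rule ennreal_enn2real[symmetric])
        also have "ennreal (1/m) * ennreal (enn2real (\<rho> y)) = ennreal ((1/m) * enn2real (\<rho> y))"
          using mpos by (subst ennreal_mult[symmetric]) auto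
        also have "\<dots> < ennreal \<epsilon>" using lt J by (simp add: ennreal_lessI)
        finally show "\<rho> y' < ennreal \<epsilon>" .
      qed
      ultimately have lt1: "\<bar>f y'\<bar> < 1" using bd by blast
      have "f y' = (1/m) * f y" unfolding y'_def using fsc \<open>y \<in> Y\<close> by blast
      also have "\<bar>\<dots>\<bar> = 1" using mpos unfolding m_def by (simp add: abs_mult)
      finally show False using lt1 by simp
    qed
  qed
  obtain g where gadd: "\<forall>x y. g (x+y) = g x + g y" and gsc: "\<forall>c x. g (smul c x) = c * g x"
     and gY: "\<forall>y\<in>Y. g y = f y" and gp: "\<forall>x\<in>S. g x \<le> p x"
    using hb_graph[OF vs S Y pt ph f dom] by blast
  have gabs: "\<bar>g x\<bar> \<le> p x" if "x \<in> S" for x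
  proof -
    have a: "g (smul (-1) x) \<le> p (smul (-1) x)" using gp V.subspace_scale[OF S that] by blast
    have b: "g (smul (-1) x) = (-1) * g x" using gsc by blast
    have c: "p (smul (-1) x) = \<bar>-1\<bar> * p x" using ph that by blast
    have "- g x \<le> p x" using a unfolding b c by simp
    moreover have "g x \<le> p x" using gp that by blast
    ultimately show ?thesis by (simp add: abs_le_iff)
  qed
  define \<eta> where "\<eta> = \<epsilon> / (real (card J) + 1)"
  have eta: "\<eta> > 0" unfolding \<eta>_def using J by simp
  show ?thesis
  proof (intro exI[of _ g] conjI exI[of _ \<eta>] allI impI)
    fix x assume x: "\<forall>\<rho>\<in>J. \<rho> x < ennreal \<eta>"
    have "\<rho> x < top" if "\<rho> \<in> J" for \<rho>
      by (rule order.strict_trans[OF _ ennreal_less_top]) (use x that in blast)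
    then have "x \<in> S" unfolding S_def by blast
    have "enn2real (\<rho> x) \<le> \<eta>" if "\<rho> \<in> J" for \<rho>
    proof -
      have "enn2real (\<rho> x) \<le> enn2real (ennreal \<eta>)"
        by (rule enn2real_mono) (use x that in \<open>auto intro: less_imp_le\<close>)
      then show ?thesis using eta by simp
    qed
    then have "q x \<le> real (card J) * \<eta>" unfolding q_def by (rule sum_bounded_above)
    then have "p x \<le> real (card J) * \<eta> / \<epsilon>" unfolding p_def using J by (simp add: divide_right_mono)
    also have "\<dots> = real (card J) / (real (card J) + 1)" unfolding \<eta>_def using J by simp
    also have "\<dots> < 1" by simp
    finally show "\<bar>g x\<bar> < 1" using gabs[OF \<open>x \<in> S\<close>] by simp
  qed (use gadd gsc gY eta in auto)
qed



theorem corollary4p2: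
  shows
  "(\<forall>(smul :: real \<Rightarrow> 'a::ab_group_add \<Rightarrow> 'a) (P :: ('a \<Rightarrow> ennreal) set) (Y :: 'a set) (f :: 'a \<Rightarrow> real).
      vector_space smul \<and> (\<forall>\<rho>\<in>P. ext_seminorm smul \<rho>) \<and> module.subspace smul Y \<and>
      linear_functional_on smul Y f \<and>
      continuous_map (subtopology (elc_topology P) Y) euclidean f
      \<longrightarrow> (\<exists>g. Vector_Spaces.linear smul (*) g \<and> continuous_map (elc_topology P) euclidean g \<and>
              (\<forall>y\<in>Y. g y = f y)))
   \<and>
   (\<forall>(smul :: complex \<Rightarrow> 'b::ab_group_add \<Rightarrow> 'b) (P :: ('b \<Rightarrow> ennreal) set) (Y :: 'b set) (f :: 'b \<Rightarrow> complex).
      vector_space smul \<and> (\<forall>\<rho>\<in>P. ext_seminorm smul \<rho>) \<and> module.subspace smul Y \<and>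
      linear_functional_on smul Y f \<and>
      continuous_map (subtopology (elc_topology P) Y) euclidean f
      \<longrightarrow> (\<exists>g. Vector_Spaces.linear smul (*) g \<and> continuous_map (elc_topology P) euclidean g \<and>
              (\<forall>y\<in>Y. g y = f y)))"
proof (intro conjI allI impI; elim conjE)
  fix smul :: "real \<Rightarrow> 'a::ab_group_add \<Rightarrow> 'a" and P Y and f :: "'a \<Rightarrow> real"
  assume vs: "vector_space smul" and semi: "\<forall>\<rho>\<in>P. ext_seminorm smul \<rho>" and Y: "module.subspace smul Y"
    and f: "linear_functional_on smul Y f"
    and cont: "continuous_map (subtopology (elc_topology P) Y) euclidean f"
  interpret V: vector_space smul by fact
  have Y0: "0 \<in> Y" using V.subspace_0[OF Y] .
  have "f (0 + 0) = f 0 + f 0" using f Y0 unfolding linear_functional_on_def by blast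
  then have f0: "f 0 = 0" by simp
  obtain J \<epsilon> where J: "finite J" "J \<subseteq> P" "\<epsilon> > 0"
    and bd: "\<forall>y\<in>Y. (\<forall>\<rho>\<in>J. \<rho> y < ennreal \<epsilon>) \<longrightarrow> norm (f y) < 1"
    using cont_to_bound[OF Y0 f0 cont] by blast
  obtain g \<eta> where gadd: "\<forall>x y. g (x+y) = g x + g y" and gsc: "\<forall>c x. g (smul c x) = c * g x"
    and gY: "\<forall>y\<in>Y. g y = f y" and eta: "\<eta> > 0" and gb: "\<forall>x. (\<forall>\<rho>\<in>J. \<rho> x < ennreal \<eta>) \<longrightarrow> \<bar>g x\<bar> < 1"
    using real_core[OF vs semi Y f J] bd by auto
  show "\<exists>g. Vector_Spaces.linear smul (*) g \<and> continuous_map (elc_topology P) euclidean g \<and> (\<forall>y\<in>Y. g y = f y)"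
  proof (intro exI[of _ g] conjI)
    show "Vector_Spaces.linear smul (*) g"
      unfolding Vector_Spaces.linear_iff using vs vector_space_over_itself.vector_space_axioms gadd gsc by blast
    show "continuous_map (elc_topology P) euclidean g"
      by (rule bound_to_cont[of g smul P J \<eta> 1]) (use gadd gsc semi J eta gb in auto)
  qed (use gY in auto)
next
  fix smul :: "complex \<Rightarrow> 'b::ab_group_add \<Rightarrow> 'b" and P Y and f :: "'b \<Rightarrow> complex"
  assume vs: "vector_space smul" and semi: "\<forall>\<rho>\<in>P. ext_seminorm smul \<rho>" and Y: "module.subspace smul Y"
    and f: "linear_functional_on smul Y f"
    and cont: "continuous_map (subtopology (elc_topology P) Y) euclidean f"
  interpret V: vector_space smul by fact
  have fadd: "\<forall>x\<in>Y. \<forall>y\<in>Y. f (x + y) = f x + f y" and fsc: "\<forall>a. \<forall>x\<in>Y. f (smul a x) = a * f x"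
    using f unfolding linear_functional_on_def by auto
  have Y0: "0 \<in> Y" using V.subspace_0[OF Y] .
  have "f (0 + 0) = f 0 + f 0" using fadd Y0 by blast
  then have f0: "f 0 = 0" by simp
  define rs where "rs r x = smul (complex_of_real r) x" for r x
  have rvs: "vector_space rs"
    by unfold_locales (simp_all add: rs_def V.scale_right_distrib V.scale_left_distrib)
  interpret R: vector_space rs by fact
  have rsemi: "\<forall>\<rho>\<in>P. ext_seminorm rs \<rho>"
    using semi unfolding ext_seminorm_def rs_def by auto
  have rY: "R.subspace Y"
    using Y unfolding R.subspace_def V.subspace_def rs_def by blast
  have rf: "linear_functional_on rs Y (\<lambda>y. Re (f y))"
    unfolding linear_functional_on_def rs_def using fadd fsc by simp
  obtain J \<epsilon> where J: "finite J" "J \<subseteq> P" "\<epsilon> > 0"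
    and bd: "\<forall>y\<in>Y. (\<forall>\<rho>\<in>J. \<rho> y < ennreal \<epsilon>) \<longrightarrow> norm (f y) < 1"
    using cont_to_bound[OF Y0 f0 cont] by blast
  have bd': "\<forall>y\<in>Y. (\<forall>\<rho>\<in>J. \<rho> y < ennreal \<epsilon>) \<longrightarrow> \<bar>Re (f y)\<bar> < 1"
    using bd abs_Re_le_cmod le_less_trans by blast
  obtain G \<eta> where Gadd: "\<forall>x y. G (x+y) = G x + G y" and Gsc: "\<forall>c x. G (rs c x) = c * G x"
    and GY: "\<forall>y\<in>Y. G y = Re (f y)" and eta: "\<eta> > 0"
    and Gb: "\<forall>x. (\<forall>\<rho>\<in>J. \<rho> x < ennreal \<eta>) \<longrightarrow> \<bar>G x\<bar> < 1"
    using real_core[OF rvs rsemi rY rf J bd'] by blast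
  define g where "g x = complex_of_real (G x) - \<i> * complex_of_real (G (smul \<i> x))" for x
  have dec: "G (smul c w) = Re c * G w + Im c * G (smul \<i> w)" for c w
  proof -
    have "c = complex_of_real (Re c) + complex_of_real (Im c) * \<i>" by (simp add: complex_eq_iff)
    then have "smul c w = rs (Re c) w + rs (Im c) (smul \<i> w)"
      unfolding rs_def by (metis V.scale_left_distrib V.scale_scale)
    then show ?thesis using Gadd Gsc by simp
  qed
  have gadd: "g (x + y) = g x + g y" for x y
    unfolding g_def by (simp add: V.scale_right_distrib Gadd algebra_simps)
  have gsc: "g (smul c x) = c * g x" for c x
  proof -
    have "G (smul \<i> (smul c x)) = G (smul (\<i> * c) x)" by simp
    also have "\<dots> = - Im c * G x + Re c * G (smul \<i> x)" using dec[of "\<i> * c" x] by simp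
    finally have e: "G (smul \<i> (smul c x)) = - Im c * G x + Re c * G (smul \<i> x)" .
    show ?thesis unfolding g_def e dec[of c x] by (simp add: complex_eq_iff algebra_simps)
  qed
  have gY: "g y = f y" if "y \<in> Y" for y
  proof -
    have "smul \<i> y \<in> Y" using V.subspace_scale[OF Y that] .
    then have "G (smul \<i> y) = - Im (f y)" using GY fsc that by simp
    then show ?thesis unfolding g_def using GY that by (simp add: complex_eq_iff)
  qed
  have gb: "norm (g x) < 2" if x: "\<forall>\<rho>\<in>J. \<rho> x < ennreal \<eta>" for x
  proof -
    have "\<forall>\<rho>\<in>J. \<rho> (smul \<i> x) < ennreal \<eta>"
    proof
      fix \<rho> assume r: "\<rho> \<in> J"
      then have "\<rho> (smul \<i> x) = ennreal (cmod \<i>) * \<rho> x"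
        using semi J unfolding ext_seminorm_def by blast
      then show "\<rho> (smul \<i> x) < ennreal \<eta>" using x r by simp
    qed
    then have "\<bar>G (smul \<i> x)\<bar> < 1" using Gb by blast
    moreover have "\<bar>G x\<bar> < 1" using Gb x by blast
    moreover have "norm (g x) \<le> \<bar>G x\<bar> + \<bar>G (smul \<i> x)\<bar>"
      unfolding g_def by (rule order.trans[OF norm_triangle_ineq4]) (simp add: norm_mult)
    ultimately show ?thesis by simp
  qed
  show "\<exists>g. Vector_Spaces.linear smul (*) g \<and> continuous_map (elc_topology P) euclidean g \<and> (\<forall>y\<in>Y. g y = f y)"
  proof (intro exI[of _ g] conjI)
    show "Vector_Spaces.linear smul (*) g"
      unfolding Vector_Spaces.linear_iff using vs vector_space_over_itself.vector_space_axioms gadd gsc by blast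
    show "continuous_map (elc_topology P) euclidean g"
      by (rule bound_to_cont[of g smul P J \<eta> 2]) (use gadd gsc semi J eta gb in auto)
  qed (use gY in auto)
qed

end
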